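(* Let $n\ge2$ and let $x\in\overline{L_n}$ be an ultrafilter that is not irreducible in $\beta\mathbb{N}$. Then there exist $i,j<n$ and ultrafilters $x_i\in\overline{L_i}$, $x_j\in\overline{L_j}$ such that $x=x_ix_j$.
   Context: $\mathbb{N}=\{1,2,3,\dots\}$; $\beta\mathbb{N}$ is the set of ultrafilters on $\mathbb{N}$ (Stone–Čech compactification, naturals identified with principal ultrafilters), with multiplication: $A\in xy$ iff $\{n:A/n\in y\}\in x$, $A/n=\{m:mn\in A\}$. For $A\subseteq\mathbb{N}$, $\overline{A}=\{x\in\beta\mathbb{N}:A\in x\}$. $P$ is the set of primes, $L_0=\{1\}$, $L_n=\{a_1\cdots a_n:a_i\in P\}$. An element $p\in\beta\mathbb{N}$ is irreducible if it cannot be written as $p=xy$ with $x,y\in\beta\mathbb{N}\setminus\{1\}$. *)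

theory Defs
  imports "HOL-Computational_Algebra.Primes"
begin

definition PosN :: "nat set" where
  "PosN = {n. 1 \<le> n}"

text \<open>Ultrafilters on N (elements of beta N), represented as sets of subsets of N.\<close>
definition is_uf :: "nat set set \<Rightarrow> bool" where
  "is_uf x \<longleftrightarrow>
     x \<subseteq> Pow PosN \<and> PosN \<in> x \<and> {} \<notin> x \<and>
     (\<forall>A\<in>x. \<forall>B\<in>x. A \<inter> B \<in> x) \<and>
     (\<forall>A\<in>x. \<forall>B. A \<subseteq> B \<and> B \<subseteq> PosN \<longrightarrow> B \<in> x) \<and>
     (\<forall>A. A \<subseteq> PosN \<longrightarrow> A \<in> x \<or> PosN - A \<in> x)"

text \<open>Principal ultrafilter at n (identification of N with principal ultrafilters).\<close>
definition princ :: "nat \<Rightarrow> nat set set" where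
  "princ n = {A. A \<subseteq> PosN \<and> n \<in> A}"

definition sdiv :: "nat set \<Rightarrow> nat \<Rightarrow> nat set" where
  "sdiv A n = {m \<in> PosN. m * n \<in> A}"

definition uf_mult :: "nat set set \<Rightarrow> nat set set \<Rightarrow> nat set set" where
  "uf_mult x y = {A. A \<subseteq> PosN \<and> {n \<in> PosN. sdiv A n \<in> y} \<in> x}"

definition ucl :: "nat set \<Rightarrow> nat set set set" where
  "ucl A = {x. is_uf x \<and> A \<in> x}"

definition Lset :: "nat \<Rightarrow> nat set" where
  "Lset k = {prod_list ps | ps. length ps = k \<and> (\<forall>p\<in>set ps. prime p)}"

definition uf_irreducible :: "nat set set \<Rightarrow> bool" where
  "uf_irreducible p \<longleftrightarrow> is_uf p \<and>
     \<not> (\<exists>x y. is_uf x \<and> is_uf y \<and> x \<noteq> princ 1 \<and> y \<noteq> princ 1 \<and> p = uf_mult x y)"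

end

theory Submission
  imports Defs
begin

definition Om :: "nat \<Rightarrow> nat" where "Om m = size (prime_factorization m)"

lemma Lset_char: "m \<in> Lset k \<longleftrightarrow> m \<ge> 1 \<and> Om m = k"
proof
  assume "m \<in> Lset k"
  then obtain ps where ps: "m = prod_list ps" "length ps = k" "\<forall>p\<in>set ps. prime p"
    unfolding Lset_def by blast
  have pm: "prod_list ps = prod_mset (mset ps)" by (simp add: prod_mset_prod_list)
  have "prime_factorization (prod_mset (mset ps)) = mset ps"
    by (rule prime_factorization_prod_mset_primes) (use ps in auto)
  hence "Om m = k" using ps pm by (simp add: Om_def)
  moreover have "m \<noteq> 0" using ps by (auto simp: prod_list_zero_iff dest: prime_gt_0_nat)
  ultimately show "m \<ge> 1 \<and> Om m = k" by simp
next
  assume a: "m \<ge> 1 \<and> Om m = k"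
  obtain ps where ps: "mset ps = prime_factorization m" using ex_mset by blast
  have "prod_list ps = m"
    using ps a prod_mset_prime_factorization_nat[of m] by (metis prod_mset_prod_list not_one_le_zero neq0_conv)
  moreover have "length ps = k" using ps a by (metis Om_def size_mset)
  moreover have "\<forall>p\<in>set ps. prime p" using ps by (metis in_prime_factors_imp_prime set_mset_mset)
  ultimately show "m \<in> Lset k" unfolding Lset_def by blast
qed

lemma Om_mult: "a \<ge> 1 \<Longrightarrow> b \<ge> 1 \<Longrightarrow> Om (a * b) = Om a + Om b"
  by (simp add: Om_def prime_factorization_mult)

lemma Lset_sub: "Lset k \<subseteq> PosN" using Lset_char by (auto simp: PosN_def)

lemma Lset0: "Lset 0 = {1}"
proof -
  have "m \<in> Lset 0 \<longleftrightarrow> m = 1" for m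
  proof
    assume "m \<in> Lset 0"
    hence "m \<ge> 1" "prime_factorization m = {#}" using Lset_char by (auto simp: Om_def)
    thus "m = 1" by (metis prod_mset_prime_factorization_nat prod_mset_empty not_one_le_zero neq0_conv)
  qed (simp add: Lset_char Om_def)
  thus ?thesis by auto
qed

lemma uf_sub: "is_uf y \<Longrightarrow> A \<in> y \<Longrightarrow> A \<subseteq> PosN"
  unfolding is_uf_def by (meson Pow_iff subsetD)
lemma uf_nemp: "is_uf y \<Longrightarrow> {} \<notin> y"
  unfolding is_uf_def by (elim conjE)
lemma uf_int: "is_uf y \<Longrightarrow> A \<in> y \<Longrightarrow> B \<in> y \<Longrightarrow> A \<inter> B \<in> y"
  unfolding is_uf_def by (elim conjE) simp
lemma uf_up: "is_uf y \<Longrightarrow> A \<in> y \<Longrightarrow> A \<subseteq> B \<Longrightarrow> B \<subseteq> PosN \<Longrightarrow> B \<in> y"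
  unfolding is_uf_def by (elim conjE) metis
lemma uf_compl: "is_uf y \<Longrightarrow> A \<subseteq> PosN \<Longrightarrow> A \<notin> y \<Longrightarrow> PosN - A \<in> y"
  unfolding is_uf_def by (elim conjE) metis

lemma uf_one: assumes "is_uf y" "{1} \<in> y" shows "y = princ 1"
proof
  show "y \<subseteq> princ 1"
  proof
    fix A assume A: "A \<in> y"
    have "A \<inter> {1} \<in> y" by (rule uf_int[OF assms(1) A assms(2)])
    hence "A \<inter> {1} \<noteq> {}" using uf_nemp[OF assms(1)] by metis
    hence "1 \<in> A" by blast
    thus "A \<in> princ 1" using uf_sub[OF assms(1) A] by (simp add: princ_def)
  qed
next
  show "princ 1 \<subseteq> y"
  proof
    fix A assume "A \<in> princ 1"
    hence "{1} \<subseteq> A" "A \<subseteq> PosN" by (auto simp: princ_def)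
    thus "A \<in> y" using uf_up[OF assms(1) assms(2)] by blast
  qed
qed

lemma uf_union: assumes "is_uf y" "A \<union> B \<in> y" "A \<subseteq> PosN" shows "A \<in> y \<or> B \<in> y"
proof (rule ccontr)
  assume c: "\<not> (A \<in> y \<or> B \<in> y)"
  hence "PosN - A \<in> y" using uf_compl[OF assms(1) assms(3)] by blast
  hence "(A \<union> B) \<inter> (PosN - A) \<in> y" using uf_int[OF assms(1) assms(2)] by blast
  moreover have "(A \<union> B) \<inter> (PosN - A) \<subseteq> B" by blast
  moreover have "B \<subseteq> PosN" using uf_sub[OF assms(1) assms(2)] by blast
  ultimately have "B \<in> y" using uf_up[OF assms(1)] by blast
  thus False using c by blast
qed

lemma uf_bounded: assumes "is_uf y" "{a\<in>PosN. Om a \<le> n} \<in> y" shows "\<exists>i\<le>n. Lset i \<in> y"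
  using assms(2)
proof (induction n)
  case 0
  have "{a\<in>PosN. Om a \<le> 0} = Lset 0" using Lset_char by (auto simp: PosN_def)
  thus ?case using 0 by auto
next
  case (Suc n)
  have "{a\<in>PosN. Om a \<le> Suc n} = {a\<in>PosN. Om a \<le> n} \<union> Lset (Suc n)"
    using Lset_char by (auto simp: PosN_def)
  hence "{a\<in>PosN. Om a \<le> n} \<in> y \<or> Lset (Suc n) \<in> y"
    using uf_union[OF assms(1)] Suc.prems by auto
  thus ?case using Suc.IH by (meson le_Suc_eq order_refl)
qed

theorem corollary2p12:
  fixes n :: nat and x :: "nat set set"
  assumes "n \<ge> 2"
    and "x \<in> ucl (Lset n)"
    and "\<not> uf_irreducible x"
  shows "\<exists>i j xi xj. i < n \<and> j < n \<and> xi \<in> ucl (Lset i) \<and> xj \<in> ucl (Lset j)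
           \<and> x = uf_mult xi xj"
proof -
  have ux: "is_uf x" "Lset n \<in> x" using assms(2) by (auto simp: ucl_def)
  then obtain y z where yz: "is_uf y" "is_uf z" "y \<noteq> princ 1" "z \<noteq> princ 1" "x = uf_mult y z"
    using assms(3) unfolding uf_irreducible_def by blast
  define T where "T = {a \<in> PosN. sdiv (Lset n) a \<in> z}"
  have T: "T \<in> y" using ux yz(5) unfolding T_def uf_mult_def by auto
  have ze: "{} \<notin> z" by (rule uf_nemp[OF yz(2)])
  have "T \<subseteq> {a\<in>PosN. Om a \<le> n}"
  proof
    fix a assume "a \<in> T"
    hence a: "a \<in> PosN" "sdiv (Lset n) a \<noteq> {}" using ze unfolding T_def by auto
    then obtain m where "m \<in> PosN" "m * a \<in> Lset n" unfolding sdiv_def by auto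
    hence "Om m + Om a = n" using a Lset_char Om_mult by (auto simp: PosN_def)
    thus "a \<in> {a\<in>PosN. Om a \<le> n}" using a by auto
  qed
  hence "{a\<in>PosN. Om a \<le> n} \<in> y" using uf_up[OF yz(1) T] by blast
  then obtain i where i: "i \<le> n" "Lset i \<in> y" using uf_bounded yz(1) by blast
  have "Lset i \<inter> T \<in> y" using uf_int[OF yz(1) i(2) T] .
  hence "Lset i \<inter> T \<noteq> {}" using uf_nemp[OF yz(1)] by metis
  then obtain a where a: "a \<in> Lset i" "a \<in> T" by blast
  have "sdiv (Lset n) a \<subseteq> Lset (n - i)"
  proof
    fix m assume "m \<in> sdiv (Lset n) a"
    hence "m \<in> PosN" "m * a \<in> Lset n" unfolding sdiv_def by auto
    thus "m \<in> Lset (n - i)" using a Lset_char Om_mult by (auto simp: PosN_def)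
  qed
  moreover have "sdiv (Lset n) a \<in> z" using a T_def by auto
  ultimately have zL: "Lset (n - i) \<in> z" using uf_up[OF yz(2)] Lset_sub by blast
  have "i \<noteq> 0" using i yz(1,3) uf_one Lset0 by auto
  moreover have "n - i \<noteq> 0" using zL yz(2,4) uf_one Lset0 by auto
  ultimately show ?thesis using i yz zL
    by (intro exI[of _ i] exI[of _ "n - i"] exI[of _ y] exI[of _ z]) (auto simp: ucl_def)
qed

end
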